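(* Fix $\delta>0$. As $T\to\infty$ along $2\mathbb N$, $$Q^1_T(\phi(\delta,T))=\sqrt{1-e^{-2\phi(\delta,\infty)}}\;e^{-c_\delta T}\,(1+o(1)),$$ where $c_\delta:=\phi(\delta,\infty)+\log\big(1+\sqrt{1-e^{-2\phi(\delta,\infty)}}\big)=\frac\delta2+\log\sqrt{2-e^{-\delta}}$.
   Context: $(S_n)$ is the simple symmetric random walk on $\mathbb Z$ started at $0$ with law $\mathbf P$. For $T\in2\mathbb N\cup\{\infty\}$ (convention $\infty\mathbb Z=\{0\}$), $\tau_1^T:=\inf\{n>0:S_n\in T\mathbb Z\}$, $\varepsilon^T_1:=S_{\tau^T_1}/T$, $Q^1_T(\lambda):=\mathbf E[e^{-\lambda\tau^T_1}\mathbf 1_{\{\varepsilon^T_1=1\}}]$ and $Q_T(\lambda):=\mathbf E[e^{-\lambda\tau^T_1}]$. For $\delta>0$, $\phi(\delta,T)$ denotes the unique real solution $\lambda$ of $Q_T(\lambda)=e^{-\delta}$; in particular $\phi(\delta,\infty)=\frac\delta2-\log\sqrt{2-e^{-\delta}}>0$. *)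

theory Defs
  imports "HOL-Analysis.Analysis" "HOL-Library.Extended_Nat" "HOL-Library.Landau_Symbols"
begin

text \<open>Simple symmetric random walk, encoded by its finite-dimensional law:
  the first n steps are uniformly distributed on the 2^n sequences in {-1,1}^n.\<close>

definition walk :: "int list \<Rightarrow> nat \<Rightarrow> int" where
  "walk xs k = sum_list (take k xs)"

definition step_paths :: "nat \<Rightarrow> int list set" where
  "step_paths n = {xs. set xs \<subseteq> {-1, 1} \<and> length xs = n}"

text \<open>Membership in T*Z, with the convention infinity*Z = {0}.\<close>
definition in_lattice :: "enat \<Rightarrow> int \<Rightarrow> bool" where
  "in_lattice T x = (case T of \<infinity> \<Rightarrow> x = 0 | enat t \<Rightarrow> int t dvd x)"

text \<open>The event tau_1^T = n (for n > 0), in terms of the first n steps.\<close>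
definition first_hit :: "enat \<Rightarrow> nat \<Rightarrow> int list \<Rightarrow> bool" where
  "first_hit T n xs = (0 < n \<and> (\<forall>k. 0 < k \<and> k < n \<longrightarrow> \<not> in_lattice T (walk xs k))
                        \<and> in_lattice T (walk xs n))"

definition tau_prob :: "enat \<Rightarrow> nat \<Rightarrow> real" where
  "tau_prob T n = real (card {xs \<in> step_paths n. first_hit T n xs}) / 2 ^ n"

text \<open>P(tau_1^T = n, eps_1^T = 1), i.e. S_{tau} = T, for finite T.\<close>
definition tau1_prob :: "nat \<Rightarrow> nat \<Rightarrow> real" where
  "tau1_prob T n = real (card {xs \<in> step_paths n. first_hit (enat T) n xs \<and> walk xs n = int T}) / 2 ^ n"

text \<open>Q_T(lambda) = E[exp(-lambda tau_1^T)], as an extended nonnegative real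
  (infinite when the series diverges). tau_1^T < infinity a.s., so the event
  tau = infinity does not contribute.\<close>
definition Q :: "enat \<Rightarrow> real \<Rightarrow> ennreal" where
  "Q T l = (\<Sum>n. ennreal (exp (- l * real n) * tau_prob T n))"

definition Q1 :: "nat \<Rightarrow> real \<Rightarrow> real" where
  "Q1 T l = enn2real (\<Sum>n. ennreal (exp (- l * real n) * tau1_prob T n))"

definition phi :: "real \<Rightarrow> enat \<Rightarrow> real" where
  "phi \<delta> T = (THE l. Q T l = ennreal (exp (- \<delta>)))"

definition c_delta :: "real \<Rightarrow> real" where
  "c_delta \<delta> = phi \<delta> \<infinity> + ln (1 + sqrt (1 - exp (- 2 * phi \<delta> \<infinity>)))"

end

theory Submission
  imports Defs
begin


lemma walk_0[simp]: "walk xs 0 = 0" by (simp add: walk_def)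
lemma walk_Cons_Suc[simp]: "walk (y#ys) (Suc k) = y + walk ys k" by (simp add: walk_def)

lemma walk_step:
  assumes "set xs \<subseteq> {-1,1}"
  shows "\<bar>walk xs (Suc k) - walk xs k\<bar> \<le> 1"
proof (cases "k < length xs")
  case True
  then have "take (Suc k) xs = take k xs @ [xs!k]" by (simp add: take_Suc_conv_app_nth)
  moreover have "xs ! k \<in> {-1,1}" using True assms nth_mem by blast
  ultimately show ?thesis by (auto simp: walk_def)
next
  case False
  then show ?thesis by (simp add: walk_def)
qed

lemma walk_abs_le:
  assumes "set xs \<subseteq> {-1,1}"
  shows "\<bar>walk xs k\<bar> \<le> int k"
proof (induction k)
  case 0 then show ?case by simp
next
  case (Suc k)
  have "\<bar>walk xs (Suc k) - walk xs k\<bar> \<le> 1" by (rule walk_step[OF assms])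
  with Suc show ?case by linarith
qed

lemma disc_ivt:
  fixes f :: "nat \<Rightarrow> int"
  assumes step: "\<And>k. \<bar>f (Suc k) - f k\<bar> \<le> 1" and "i \<le> j" "f i \<le> c" "c \<le> f j"
  shows "\<exists>k. i \<le> k \<and> k \<le> j \<and> f k = c"
  using assms(2-4)
proof (induction j)
  case 0 then show ?case by auto
next
  case (Suc j)
  show ?case
  proof (cases "i \<le> j \<and> c \<le> f j")
    case True
    then obtain k where "i \<le> k" "k \<le> j" "f k = c" using Suc.IH Suc.prems by auto
    then show ?thesis by (intro exI[of _ k]) auto
  next
    case False
    then have "i = Suc j \<or> f j < c" using Suc.prems by auto
    then show ?thesis
    proof
      assume "i = Suc j" then show ?thesis using Suc.prems by auto
    next
      assume "f j < c"
      then have "f (Suc j) = c" using step[of j] Suc.prems by linarith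
      then show ?thesis using Suc.prems by auto
    qed
  qed
qed

lemma disc_ivt_walk:
  assumes "set xs \<subseteq> {-1,1}" "i \<le> j" "walk xs i \<le> c" "c \<le> walk xs j"
  shows "\<exists>k. i \<le> k \<and> k \<le> j \<and> walk xs k = c"
  by (rule disc_ivt[OF walk_step[OF assms(1)] assms(2-4)])

lemma disc_ivt_walk':
  assumes "set xs \<subseteq> {-1,1}" "i \<le> j" "walk xs j \<le> c" "c \<le> walk xs i"
  shows "\<exists>k. i \<le> k \<and> k \<le> j \<and> walk xs k = c"
proof -
  have "\<exists>k. i \<le> k \<and> k \<le> j \<and> - walk xs k = - c"
    by (rule disc_ivt[of "\<lambda>k. - walk xs k"]) (use walk_step[OF assms(1)] assms in \<open>auto simp: abs_minus_commute\<close>)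
  then show ?thesis by auto
qed

lemma step_paths_0: "step_paths 0 = {[]}" by (auto simp: step_paths_def)

lemma step_paths_Suc_iff:
  "xs \<in> step_paths (Suc n) \<longleftrightarrow> (\<exists>y ys. xs = y#ys \<and> y \<in> {-1,1} \<and> ys \<in> step_paths n)"
  by (cases xs) (auto simp: step_paths_def)

lemma finite_step_paths: "finite (step_paths n)"
  unfolding step_paths_def by (rule finite_lists_length_eq) simp

lemma step_paths_set: "xs \<in> step_paths n \<Longrightarrow> set xs \<subseteq> {-1,1}"
  by (simp add: step_paths_def)

definition stays :: "nat \<Rightarrow> int \<Rightarrow> nat \<Rightarrow> int list \<Rightarrow> bool" where
  "stays T x n xs = (\<forall>k<n. 0 < x + walk xs k \<and> x + walk xs k < int T)"

definition cnt :: "nat \<Rightarrow> (int \<Rightarrow> bool) \<Rightarrow> int \<Rightarrow> nat \<Rightarrow> nat" where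
  "cnt T P x n = card {xs \<in> step_paths n. stays T x n xs \<and> P (x + walk xs n)}"

lemma stays_Cons: "stays T x (Suc n) (y#ys) = (0 < x \<and> x < int T \<and> stays T (x+y) n ys)"
  by (auto simp: stays_def less_Suc_eq_0_disj algebra_simps)

lemma cnt_0: "cnt T P x 0 = (if P x then 1 else 0)"
  by (simp add: cnt_def step_paths_0 stays_def)

lemma cnt_out: "\<not> (0 < x \<and> x < int T) \<Longrightarrow> cnt T P x (Suc n) = 0"
proof -
  assume a: "\<not> (0 < x \<and> x < int T)"
  have "{xs \<in> step_paths (Suc n). stays T x (Suc n) xs \<and> P (x + walk xs (Suc n))} = {}"
  proof (intro equals0I)
    fix xs assume "xs \<in> {xs \<in> step_paths (Suc n). stays T x (Suc n) xs \<and> P (x + walk xs (Suc n))}"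
    then have "stays T x (Suc n) xs" by simp
    then have "0 < x + walk xs 0 \<and> x + walk xs 0 < int T" unfolding stays_def by blast
    with a show False by simp
  qed
  then show ?thesis unfolding cnt_def by (metis card.empty)
qed

lemma cnt_Suc:
  assumes "0 < x" "x < int T"
  shows "cnt T P x (Suc n) = cnt T P (x+1) n + cnt T P (x-1) n"
proof -
  define A where "A y = {ys \<in> step_paths n. stays T (x+y) n ys \<and> P (x + (y + walk ys n))}" for y
  have eq: "{xs \<in> step_paths (Suc n). stays T x (Suc n) xs \<and> P (x + walk xs (Suc n))}
        = Cons 1 ` A 1 \<union> Cons (-1) ` A (-1)"
    using assms by (auto simp: step_paths_Suc_iff stays_Cons A_def)
  have fin: "finite (A y)" for y
    by (rule finite_subset[OF _ finite_step_paths[of n]]) (auto simp: A_def)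
  have "card (Cons 1 ` A 1 \<union> Cons (-1) ` A (-1)) = card (Cons 1 ` A 1) + card (Cons (-1) ` A (-1))"
    by (rule card_Un_disjoint) (use fin in auto)
  also have "\<dots> = card (A 1) + card (A (-1))"
    by (simp add: card_image)
  finally show ?thesis
    unfolding cnt_def eq A_def by (simp add: algebra_simps)
qed


definition u :: "nat \<Rightarrow> (int \<Rightarrow> bool) \<Rightarrow> int \<Rightarrow> nat \<Rightarrow> real" where
  "u T P x n = real (cnt T P x n) / 2^n"

lemma u_0: "u T P x 0 = (if P x then 1 else 0)" by (simp add: u_def cnt_0)
lemma u_out: "\<not> (0 < x \<and> x < int T) \<Longrightarrow> u T P x (Suc n) = 0" by (simp add: u_def cnt_out)
lemma u_Suc: "0 < x \<Longrightarrow> x < int T \<Longrightarrow> u T P x (Suc n) = (u T P (x+1) n + u T P (x-1) n)/2"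
  by (simp add: u_def cnt_Suc field_simps)
lemma u_nonneg: "0 \<le> u T P x n" by (simp add: u_def)
lemma u_le1: "u T P x n \<le> 1"
proof (induction n arbitrary: x)
  case 0 show ?case by (simp add: u_0)
next
  case (Suc n) show ?case
  proof (cases "0 < x \<and> x < int T")
    case True then show ?thesis using Suc.IH[of "x+1"] Suc.IH[of "x-1"] by (simp add: u_Suc)
  next
    case False then show ?thesis by (simp add: u_out)
  qed
qed

definition V :: "nat \<Rightarrow> (int \<Rightarrow> bool) \<Rightarrow> real \<Rightarrow> int \<Rightarrow> real" where
  "V T P s x = (\<Sum>n. s^n * u T P x n)"

lemma summable_u:
  assumes "0 \<le> s" "s < 1"
  shows "summable (\<lambda>n. s^n * u T P x n)"
proof (rule summable_comparison_test'[where g="\<lambda>n. s^n" and N=0])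
  show "summable (\<lambda>n. s^n)" using assms by (intro summable_geometric) simp
  fix n
  have "s^n * u T P x n \<le> s^n * 1" using assms u_le1 by (intro mult_left_mono) auto
  then show "norm (s^n * u T P x n) \<le> s^n" using assms u_nonneg by (simp add: abs_mult)
qed

lemma V_rec:
  assumes "0 \<le> s" "s < 1" "0 < x" "x < int T"
  shows "V T P s x = (if P x then 1 else 0) + s/2 * V T P s (x+1) + s/2 * V T P s (x-1)"
proof -
  have e1: "(\<Sum>n. s^Suc n * u T P x (Suc n)) = V T P s x - (if P x then 1 else 0)"
    using suminf_split_head[OF summable_u[OF assms(1,2), of T P x]] by (simp add: V_def u_0)
  have e2: "(\<lambda>n. s^Suc n * u T P x (Suc n)) = (\<lambda>n. s/2 * (s^n * u T P (x+1) n) + s/2 * (s^n * u T P (x-1) n))"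
    using assms by (auto simp: u_Suc fun_eq_iff field_simps)
  have e3: "(\<Sum>n. s/2 * (s^n * u T P (x+1) n) + s/2 * (s^n * u T P (x-1) n)) = s/2 * V T P s (x+1) + s/2 * V T P s (x-1)"
  proof -
    have sa: "summable (\<lambda>n. s^n * u T P (x+1) n)" and sb: "summable (\<lambda>n. s^n * u T P (x-1) n)"
      using summable_u assms by auto
    have "(\<Sum>n. s/2 * (s^n * u T P (x+1) n) + s/2 * (s^n * u T P (x-1) n))
       = (\<Sum>n. s/2 * (s^n * u T P (x+1) n)) + (\<Sum>n. s/2 * (s^n * u T P (x-1) n))"
      by (rule suminf_add[symmetric]) (use sa sb in \<open>auto intro: summable_mult\<close>)
    also have "\<dots> = s/2 * V T P s (x+1) + s/2 * V T P s (x-1)"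
      unfolding V_def by (simp only: suminf_mult[OF sa] suminf_mult[OF sb])
    finally show ?thesis .
  qed
  have "V T P s x - (if P x then 1 else 0) = s/2 * V T P s (x+1) + s/2 * V T P s (x-1)"
    using e1 e3 unfolding e2 by simp
  then show ?thesis by linarith
qed

lemma V_out:
  assumes "0 \<le> s" "s < 1" "\<not> (0 < x \<and> x < int T)"
  shows "V T P s x = (if P x then 1 else 0)"
proof -
  have "(\<Sum>n. s^Suc n * u T P x (Suc n)) = V T P s x - (if P x then 1 else 0)"
    using suminf_split_head[OF summable_u[OF assms(1,2), of T P x]] by (simp add: V_def u_0)
  moreover have "(\<lambda>n. s^Suc n * u T P x (Suc n)) = (\<lambda>n. 0)"
    using assms by (auto simp: u_out fun_eq_iff)
  ultimately show ?thesis by simp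
qed

lemma max_principle:
  fixes D :: "nat \<Rightarrow> real"
  assumes s: "0 \<le> s" "s < 1" and D0: "D 0 = 0" and DT: "D T = 0"
    and rec: "\<And>k. 0 < k \<Longrightarrow> k < T \<Longrightarrow> D k = s/2 * (D (k+1) + D (k-1))"
    and kT: "k \<le> T"
  shows "D k = 0"
proof -
  define M where "M = Max ((\<lambda>k. \<bar>D k\<bar>) ` {0..T})"
  have fin: "finite ((\<lambda>k. \<bar>D k\<bar>) ` {0..T})" by simp
  have ne: "(\<lambda>k. \<bar>D k\<bar>) ` {0..T} \<noteq> {}" by simp
  have le: "\<And>k. k \<le> T \<Longrightarrow> \<bar>D k\<bar> \<le> M" unfolding M_def by (rule Max_ge[OF fin]) auto
  have "M \<in> (\<lambda>k. \<bar>D k\<bar>) ` {0..T}" unfolding M_def by (rule Max_in[OF fin ne])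
  then obtain k0 where k0: "k0 \<le> T" "\<bar>D k0\<bar> = M" by auto
  have "M \<le> 0"
  proof (cases "0 < k0 \<and> k0 < T")
    case True
    have "M = \<bar>s/2 * (D (k0+1) + D (k0-1))\<bar>" using rec[of k0] True k0 by simp
    also have "\<dots> = s/2 * \<bar>D (k0+1) + D (k0-1)\<bar>" using s by (simp add: abs_mult)
    also have "\<dots> \<le> s/2 * (\<bar>D (k0+1)\<bar> + \<bar>D (k0-1)\<bar>)" using s by (intro mult_left_mono abs_triangle_ineq) auto
    also have "\<dots> \<le> s/2 * (M + M)" using s True by (intro mult_left_mono add_mono le) auto
    finally have "M \<le> s * M" by simp
    moreover have "0 \<le> M" using k0 by auto
    show ?thesis
    proof (rule ccontr)
      assume "\<not> M \<le> 0"
      then have "s * M < 1 * M" using s by (intro mult_strict_right_mono) auto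
      then show False using \<open>M \<le> s * M\<close> by simp
    qed
  next
    case False
    then have "k0 = 0 \<or> k0 = T" using k0 by auto
    then show ?thesis using k0 D0 DT by auto
  qed
  then show ?thesis using le[OF kT] by simp
qed

definition Hc :: "nat \<Rightarrow> real \<Rightarrow> nat \<Rightarrow> real" where
  "Hc T r k = (r^(T-k) - r^(T+k)) / (1 - r^(2*T))"

lemma aux_alg:
  fixes r d a b :: real
  assumes d: "d \<noteq> 0" and p: "1 + r^2 \<noteq> 0"
  shows "(r*a - r*b)/d = r/(1+r^2) * ((a - r*(r*b))/d + (r*(r*a) - b)/d)"
proof -
  have "(a - r*(r*b))/d + (r*(r*a) - b)/d = (1+r^2)*(a-b)/d"
    by (simp add: add_divide_distrib[symmetric] power2_eq_square algebra_simps)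
  moreover have "r/q * (q*c/d) = r*c/d" if "q \<noteq> 0" for q c :: real using that d by (simp add: field_simps)
  ultimately show ?thesis using p by (simp add: right_diff_distrib)
qed

lemma Hc_rec:
  assumes "0 < r" "r < 1" "0 < k" "k < T"
  shows "Hc T r k = r/(1+r^2) * (Hc T r (k+1) + Hc T r (k-1))"
proof -
  obtain i where i: "k = Suc i" using assms by (cases k) auto
  obtain j where j: "T = Suc (k + j)" using less_imp_Suc_add[OF assms(4)] by blast
  have "r^(2*T) < 1" by (subst power_less_one_iff) (use assms in auto)
  then have d: "1 - r^(2*T) \<noteq> 0" by simp
  have e1: "T - k = Suc j" "T - (k+1) = j" "T - (k-1) = Suc (Suc j)" using i j by auto
  have e2: "T + k = Suc (T+i)" "T + (k+1) = Suc (Suc (T+i))" "T + (k-1) = T+i" using i by auto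
  have p: "1 + r^2 \<noteq> 0" using zero_le_power2[of r] by linarith
  show ?thesis unfolding Hc_def e1 e2 power_Suc by (rule aux_alg[OF d p])
qed

lemma Hc_0: "0 < r \<Longrightarrow> Hc T r 0 = 0" by (simp add: Hc_def)
lemma Hc_T: "0 < r \<Longrightarrow> r < 1 \<Longrightarrow> 0 < T \<Longrightarrow> Hc T r T = 1"
proof -
  assume a: "0 < r" "r < 1" "0 < T"
  then have "r^(2*T) < 1" by (subst power_less_one_iff) auto
  then show ?thesis by (simp add: Hc_def mult_2)
qed


lemma first_hit_0[simp]: "\<not> first_hit T 0 xs" by (simp add: first_hit_def)

lemma int_dvd_cases:
  fixes v :: int
  assumes "int t dvd v" "0 \<le> v" "v \<le> int t" "t > 0"
  shows "v = 0 \<or> v = int t"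
proof (rule ccontr)
  assume "\<not> (v = 0 \<or> v = int t)"
  then have "0 < v" "v < int t" using assms by auto
  then show False using assms(1) zdvd_not_zless by blast
qed

lemma not_dvd_between: "0 < v \<Longrightarrow> v < int t \<Longrightarrow> \<not> int t dvd v"
  using zdvd_not_zless by blast

lemma fh_pos:
  assumes t: "t \<ge> 2" and ys: "ys \<in> step_paths n"
  shows "first_hit (enat t) (Suc n) (1#ys) \<longleftrightarrow> stays t 1 n ys \<and> (1 + walk ys n = 0 \<or> 1 + walk ys n = int t)"
proof -
  define xs where "xs = 1 # ys"
  have sx: "set xs \<subseteq> {-1,1}" using ys by (auto simp: xs_def step_paths_def)
  have w1: "walk xs 1 = 1" by (simp add: xs_def walk_def)
  have wS: "walk xs (Suc k) = 1 + walk ys k" for k by (simp add: xs_def)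
  show ?thesis
  proof
    assume fh: "first_hit (enat t) (Suc n) (1#ys)"
    then have nd: "\<And>k. 0 < k \<Longrightarrow> k < Suc n \<Longrightarrow> \<not> int t dvd walk xs k"
      and ed: "int t dvd walk xs (Suc n)"
      by (auto simp: first_hit_def in_lattice_def xs_def)
    have inside: "0 < walk xs k \<and> walk xs k < int t" if k: "0 < k" "k \<le> n" for k
    proof (rule ccontr)
      assume "\<not> (0 < walk xs k \<and> walk xs k < int t)"
      then consider "walk xs k \<le> 0" | "int t \<le> walk xs k" by linarith
      then show False
      proof cases
        case 1
        then obtain j where "1 \<le> j" "j \<le> k" "walk xs j = 0"
          using disc_ivt_walk'[OF sx, of 1 k 0] k w1 by auto
        then show False using nd[of j] k by auto
      next
        case 2
        then obtain j where "1 \<le> j" "j \<le> k" "walk xs j = int t"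
          using disc_ivt_walk[OF sx, of 1 k "int t"] k w1 t by auto
        then show False using nd[of j] k by auto
      qed
    qed
    have "stays t 1 n ys" unfolding stays_def
    proof (intro allI impI)
      fix k assume "k < n"
      then show "0 < 1 + walk ys k \<and> 1 + walk ys k < int t" using inside[of "Suc k"] wS[of k] by auto
    qed
    moreover have "walk xs (Suc n) = 0 \<or> walk xs (Suc n) = int t"
    proof -
      have n0: "n \<noteq> 0"
      proof
        assume "n = 0"
        then have "int t dvd 1" using ed w1 by simp
        then show False using t by simp
      qed
      then have "0 < walk xs n \<and> walk xs n < int t" using inside[of n] by auto
      moreover have "\<bar>walk xs (Suc n) - walk xs n\<bar> \<le> 1" by (rule walk_step[OF sx])
      ultimately show ?thesis using int_dvd_cases[OF ed] t by auto
    qed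
    ultimately show "stays t 1 n ys \<and> (1 + walk ys n = 0 \<or> 1 + walk ys n = int t)"
      using wS[of n] by auto
  next
    assume a: "stays t 1 n ys \<and> (1 + walk ys n = 0 \<or> 1 + walk ys n = int t)"
    have "\<not> int t dvd walk xs k" if kk: "0 < k" "k < Suc n" for k
    proof -
      obtain k' where k': "k = Suc k'" "k' < n" using kk by (cases k) auto
      then show ?thesis using a wS[of k'] not_dvd_between unfolding stays_def by auto
    qed
    moreover have "int t dvd walk xs (Suc n)" using a wS[of n] by auto
    ultimately show "first_hit (enat t) (Suc n) (1#ys)"
      by (auto simp: first_hit_def in_lattice_def xs_def)
  qed
qed

lemma fh_neg_end:
  assumes t: "t \<ge> 2" and ys: "ys \<in> step_paths n" and fh: "first_hit (enat t) (Suc n) ((-1)#ys)"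
  shows "walk ((-1)#ys) (Suc n) \<noteq> int t"
proof
  define xs where "xs = (-1) # ys"
  have sx: "set xs \<subseteq> {-1,1}" using ys by (auto simp: xs_def step_paths_def)
  have w1: "walk xs 1 = -1" by (simp add: xs_def walk_def)
  assume e: "walk ((-1)#ys) (Suc n) = int t"
  then obtain j where j: "1 \<le> j" "j \<le> Suc n" "walk xs j = 0"
    using disc_ivt_walk[OF sx, of 1 "Suc n" 0] w1 by (auto simp: xs_def)
  then have "j \<noteq> Suc n" using e t by (auto simp: xs_def)
  have "\<forall>k. 0 < k \<and> k < Suc n \<longrightarrow> \<not> in_lattice (enat t) (walk xs k)"
    using fh by (simp add: first_hit_def xs_def)
  moreover have "0 < j \<and> j < Suc n" using j \<open>j \<noteq> Suc n\<close> by auto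
  ultimately have "\<not> in_lattice (enat t) (walk xs j)" by blast
  then show False using j by (simp add: in_lattice_def)
qed

lemma sum_list_uminus: "sum_list (map uminus xs) = - sum_list (xs :: int list)"
  by (induction xs) auto

lemma walk_uminus: "walk (map uminus xs) k = - walk xs k"
  by (simp add: walk_def take_map sum_list_uminus)

lemma in_lattice_uminus: "in_lattice T (-v) = in_lattice T v"
  by (cases T) (auto simp: in_lattice_def)

lemma fh_uminus: "first_hit T n (map uminus xs) = first_hit T n xs"
  by (simp add: first_hit_def walk_uminus in_lattice_uminus)

lemma card_tau1:
  assumes t: "t \<ge> 2"
  shows "card {xs \<in> step_paths (Suc n). first_hit (enat t) (Suc n) xs \<and> walk xs (Suc n) = int t}
    = cnt t (\<lambda>v. v = int t) 1 n"
proof -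
  have "{xs \<in> step_paths (Suc n). first_hit (enat t) (Suc n) xs \<and> walk xs (Suc n) = int t}
      = Cons 1 ` {ys \<in> step_paths n. stays t 1 n ys \<and> 1 + walk ys n = int t}"
  proof (intro set_eqI iffI)
    fix xs assume xs: "xs \<in> {xs \<in> step_paths (Suc n). first_hit (enat t) (Suc n) xs \<and> walk xs (Suc n) = int t}"
    then obtain y ys where yy: "xs = y#ys" "y \<in> {-1,1}" "ys \<in> step_paths n"
      by (auto simp: step_paths_Suc_iff)
    have "y = 1" using fh_neg_end[OF t yy(3)] xs yy by auto
    then show "xs \<in> Cons 1 ` {ys \<in> step_paths n. stays t 1 n ys \<and> 1 + walk ys n = int t}"
      using fh_pos[OF t yy(3)] xs yy by auto
  next
    fix xs assume "xs \<in> Cons 1 ` {ys \<in> step_paths n. stays t 1 n ys \<and> 1 + walk ys n = int t}"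
    then obtain ys where "xs = 1#ys" "ys \<in> step_paths n" "stays t 1 n ys" "1 + walk ys n = int t" by auto
    then show "xs \<in> {xs \<in> step_paths (Suc n). first_hit (enat t) (Suc n) xs \<and> walk xs (Suc n) = int t}"
      using fh_pos[OF t] by (auto simp: step_paths_Suc_iff)
  qed
  then show ?thesis by (simp add: cnt_def card_image)
qed

lemma card_tau:
  assumes t: "t \<ge> 2"
  shows "card {xs \<in> step_paths (Suc n). first_hit (enat t) (Suc n) xs}
    = 2 * cnt t (\<lambda>v. v = 0 \<or> v = int t) 1 n"
proof -
  define A where "A = {ys \<in> step_paths n. stays t 1 n ys \<and> (1 + walk ys n = 0 \<or> 1 + walk ys n = int t)}"
  have mm: "map uminus (map uminus ys) = (ys :: int list)" for ys by (induction ys) auto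
  have sp_u: "ys \<in> step_paths n \<Longrightarrow> map uminus ys \<in> step_paths n" for ys
    by (auto simp: step_paths_def)
  have fhn: "first_hit (enat t) (Suc n) ((-1)#ys) = first_hit (enat t) (Suc n) (1 # map uminus ys)" for ys
    using fh_uminus[of "enat t" "Suc n" "(-1)#ys"] by simp
  have eq: "{xs \<in> step_paths (Suc n). first_hit (enat t) (Suc n) xs}
      = Cons 1 ` A \<union> Cons (-1) ` (map uminus ` A)"
  proof (intro set_eqI iffI)
    fix xs assume xs: "xs \<in> {xs \<in> step_paths (Suc n). first_hit (enat t) (Suc n) xs}"
    then obtain y ys where yy: "xs = y#ys" "y \<in> {-1,1}" "ys \<in> step_paths n"
      by (auto simp: step_paths_Suc_iff)
    show "xs \<in> Cons 1 ` A \<union> Cons (-1) ` (map uminus ` A)"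
    proof (cases "y = 1")
      case True then show ?thesis using fh_pos[OF t yy(3)] xs yy by (auto simp: A_def)
    next
      case False
      then have "y = -1" using yy by auto
      then have "map uminus ys \<in> A" using fh_pos[OF t sp_u[OF yy(3)]] xs yy fhn[of ys] sp_u[OF yy(3)]
        by (auto simp: A_def)
      then have "map uminus (map uminus ys) \<in> map uminus ` A" by blast
      then show ?thesis using yy \<open>y = -1\<close> mm by auto
    qed
  next
    fix xs assume xs: "xs \<in> Cons 1 ` A \<union> Cons (-1) ` (map uminus ` A)"
    then show "xs \<in> {xs \<in> step_paths (Suc n). first_hit (enat t) (Suc n) xs}"
    proof
      assume "xs \<in> Cons 1 ` A"
      then show ?thesis using fh_pos[OF t] by (auto simp: A_def step_paths_Suc_iff)
    next
      assume "xs \<in> Cons (-1) ` (map uminus ` A)"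
      then obtain ys where ys: "xs = (-1) # map uminus ys" "ys \<in> A" by auto
      then have "first_hit (enat t) (Suc n) (1 # ys)" using fh_pos[OF t] by (auto simp: A_def)
      then have "first_hit (enat t) (Suc n) xs" using fhn[of "map uminus ys"] ys mm by simp
      then show ?thesis using ys sp_u by (auto simp: A_def step_paths_Suc_iff)
    qed
  qed
  have fin: "finite A" by (rule finite_subset[OF _ finite_step_paths[of n]]) (auto simp: A_def)
  have inj: "inj_on (map uminus) A" by (metis inj_on_inverseI mm)
  have "card (Cons 1 ` A \<union> Cons (-1) ` (map uminus ` A)) = card (Cons 1 ` A) + card (Cons (-1) ` (map uminus ` A))"
    by (rule card_Un_disjoint) (use fin in auto)
  also have "\<dots> = card A + card A" by (simp add: card_image inj)
  finally show ?thesis unfolding eq by (simp add: cnt_def A_def)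
qed

lemma tau_prob_0: "tau_prob T 0 = 0" by (simp add: tau_prob_def)
lemma tau1_prob_0: "tau1_prob t 0 = 0" by (simp add: tau1_prob_def)

lemma tau_prob_Suc: "t \<ge> 2 \<Longrightarrow> tau_prob (enat t) (Suc n) = u t (\<lambda>v. v = 0 \<or> v = int t) 1 n"
  by (simp add: tau_prob_def card_tau u_def)

lemma tau1_prob_Suc: "t \<ge> 2 \<Longrightarrow> tau1_prob t (Suc n) = u t (\<lambda>v. v = int t) 1 n / 2"
  by (simp add: tau1_prob_def card_tau1 u_def)

lemma tau_prob_inf:
  assumes "n < t"
  shows "tau_prob \<infinity> n = tau_prob (enat t) n"
proof -
  have "first_hit \<infinity> n xs = first_hit (enat t) n xs" if xs: "xs \<in> step_paths n" for xs
  proof -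
    have "in_lattice (enat t) (walk xs k) = (walk xs k = 0)" if "k \<le> n" for k
    proof -
      have "\<bar>walk xs k\<bar> \<le> int k" by (rule walk_abs_le[OF step_paths_set[OF xs]])
      then have "\<bar>walk xs k\<bar> < int t" using that assms by linarith
      then show ?thesis using dvd_imp_le_int[of "walk xs k" "int t"] by (auto simp: in_lattice_def)
    qed
    then show ?thesis by (auto simp: first_hit_def in_lattice_def)
  qed
  then show ?thesis unfolding tau_prob_def by (metis (no_types, lifting) mem_Collect_eq Collect_cong)
qed


definition sr :: "real \<Rightarrow> real" where "sr r = 2*r/(1+r^2)"

lemma sr_pos: "0 < r \<Longrightarrow> 0 < sr r"
  unfolding sr_def by (simp add: add_pos_nonneg)

lemma sr_lt1: assumes "0 < r" "r < 1" shows "sr r < 1"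
proof -
  have "0 < (1 - r)^2" using assms by simp
  then have "2*r < 1 + r^2" by (simp add: power2_eq_square algebra_simps)
  then show ?thesis unfolding sr_def using assms by (simp add: add_pos_nonneg)
qed

lemma gen_unique:
  assumes s: "0 \<le> s" "s < 1"
    and W0: "V t P s 0 = W 0" and Wt: "V t P s (int t) = W t"
    and Wrec: "\<And>k. 0 < k \<Longrightarrow> k < t \<Longrightarrow> W k = s/2 * (W (k+1) + W (k-1))"
    and Pno: "\<And>k. 0 < k \<Longrightarrow> k < t \<Longrightarrow> \<not> P (int k)"
    and k: "k \<le> t"
  shows "V t P s (int k) = W k"
proof -
  define D where "D k = V t P s (int k) - W k" for k
  have "D k = 0"
  proof (rule max_principle[OF s, of D t])
    show "D 0 = 0" using W0 by (simp add: D_def)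
    show "D t = 0" using Wt by (simp add: D_def)
    show "k \<le> t" by (rule k)
    fix k assume k: "0 < k" "k < t"
    have "V t P s (int k) = (if P (int k) then 1 else 0) + s/2 * V t P s (int k + 1) + s/2 * V t P s (int k - 1)"
      by (rule V_rec) (use s k in auto)
    moreover have "int (k+1) = int k + 1" "int (k-1) = int k - 1" using k by auto
    ultimately show "D k = s/2 * (D (k+1) + D (k-1))"
      using Wrec[OF k] Pno[OF k] by (simp add: D_def algebra_simps)
  qed
  then show ?thesis by (simp add: D_def)
qed

lemma sr_half: "sr r / 2 = r/(1+r^2)"
proof -
  have "1 + r^2 \<noteq> 0" using zero_le_power2[of r] by linarith
  then show ?thesis by (simp add: sr_def field_simps)
qed

lemma V_Hc:
  assumes t: "t \<ge> 2" and r: "0 < r" "r < 1" and k: "k \<le> t"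
  shows "V t (\<lambda>v. v = int t) (sr r) (int k) = Hc t r k"
proof (rule gen_unique[OF _ _ _ _ _ _ k])
  show "0 \<le> sr r" "sr r < 1" using sr_pos sr_lt1 r by (auto intro: less_imp_le)
  show "V t (\<lambda>v. v = int t) (sr r) 0 = Hc t r 0"
    using V_out[of "sr r" 0 t] sr_pos sr_lt1 r t by (simp add: Hc_0 less_imp_le)
  show "V t (\<lambda>v. v = int t) (sr r) (int t) = Hc t r t"
    using V_out[of "sr r" "int t" t] sr_pos sr_lt1 r t by (simp add: Hc_T less_imp_le)
  fix k assume "0 < k" "k < t"
  then show "Hc t r k = sr r / 2 * (Hc t r (k + 1) + Hc t r (k - 1))"
    using Hc_rec r by (simp add: sr_half)
  show "\<not> int k = int t" using \<open>k < t\<close> by simp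
qed

lemma V_Kc:
  assumes t: "t \<ge> 2" and r: "0 < r" "r < 1" and k: "k \<le> t"
  shows "V t (\<lambda>v. v = 0 \<or> v = int t) (sr r) (int k) = Hc t r k + Hc t r (t - k)"
proof (rule gen_unique[OF _ _ _ _ _ _ k])
  show "0 \<le> sr r" "sr r < 1" using sr_pos sr_lt1 r by (auto intro: less_imp_le)
  show "V t (\<lambda>v. v = 0 \<or> v = int t) (sr r) 0 = Hc t r 0 + Hc t r (t - 0)"
    using V_out[of "sr r" 0 t] sr_pos sr_lt1 r t by (simp add: Hc_0 Hc_T less_imp_le)
  show "V t (\<lambda>v. v = 0 \<or> v = int t) (sr r) (int t) = Hc t r t + Hc t r (t - t)"
    using V_out[of "sr r" "int t" t] sr_pos sr_lt1 r t by (simp add: Hc_0 Hc_T less_imp_le)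
  fix k assume k: "0 < k" "k < t"
  have "Hc t r (t-k) = r/(1+r^2) * (Hc t r (t-k+1) + Hc t r (t-k-1))"
    by (rule Hc_rec) (use k r in auto)
  moreover have "t - k + 1 = t - (k - 1)" "t - k - 1 = t - (k+1)" using k by auto
  ultimately show "Hc t r k + Hc t r (t - k) = sr r / 2 * (Hc t r (k + 1) + Hc t r (t - (k + 1)) + (Hc t r (k - 1) + Hc t r (t - (k - 1))))"
    using Hc_rec[OF r k] by (simp add: sr_half algebra_simps)
  show "\<not> (int k = 0 \<or> int k = int t)" using k by simp
qed

lemma sums_tau1:
  assumes t: "t \<ge> 2" and r: "0 < r" "r < 1"
  shows "(\<lambda>n. sr r ^ n * tau1_prob t n) sums (sr r / 2 * Hc t r 1)"
proof -
  let ?s = "sr r"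
  have s: "0 \<le> ?s" "?s < 1" using sr_pos sr_lt1 r by (auto intro: less_imp_le)
  have "(\<lambda>n. ?s^n * u t (\<lambda>v. v = int t) 1 n) sums V t (\<lambda>v. v = int t) ?s 1"
    unfolding V_def by (rule summable_sums[OF summable_u[OF s]])
  then have X: "(\<lambda>n. ?s^n * u t (\<lambda>v. v = int t) 1 n) sums Hc t r 1"
    using V_Hc[OF t r, of 1] t by simp
  have "(\<lambda>n. ?s/2 * (?s^n * u t (\<lambda>v. v = int t) 1 n)) sums (?s/2 * Hc t r 1)"
    by (rule sums_mult[OF X])
  moreover have "(\<lambda>n. ?s/2 * (?s^n * u t (\<lambda>v. v = int t) 1 n)) = (\<lambda>n. ?s ^ Suc n * tau1_prob t (Suc n))"
    using t by (simp add: tau1_prob_Suc fun_eq_iff)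
  ultimately have "(\<lambda>n. ?s ^ Suc n * tau1_prob t (Suc n)) sums (?s/2 * Hc t r 1)" by simp
  then show ?thesis by (subst (asm) sums_Suc_iff) (simp add: tau1_prob_0)
qed

lemma sums_tau:
  assumes t: "t \<ge> 2" and r: "0 < r" "r < 1"
  shows "(\<lambda>n. sr r ^ n * tau_prob (enat t) n) sums (sr r * (Hc t r 1 + Hc t r (t - 1)))"
proof -
  let ?s = "sr r"
  let ?P = "\<lambda>v. v = 0 \<or> v = int t"
  have s: "0 \<le> ?s" "?s < 1" using sr_pos sr_lt1 r by (auto intro: less_imp_le)
  have "(\<lambda>n. ?s^n * u t ?P 1 n) sums V t ?P ?s 1"
    unfolding V_def by (rule summable_sums[OF summable_u[OF s]])
  then have X: "(\<lambda>n. ?s^n * u t ?P 1 n) sums (Hc t r 1 + Hc t r (t - 1))"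
    using V_Kc[OF t r, of 1] t by simp
  have "(\<lambda>n. ?s * (?s^n * u t ?P 1 n)) sums (?s * (Hc t r 1 + Hc t r (t - 1)))"
    by (rule sums_mult[OF X])
  moreover have "(\<lambda>n. ?s * (?s^n * u t ?P 1 n)) = (\<lambda>n. ?s ^ Suc n * tau_prob (enat t) (Suc n))"
    using t by (simp add: tau_prob_Suc fun_eq_iff)
  ultimately have "(\<lambda>n. ?s ^ Suc n * tau_prob (enat t) (Suc n)) sums (?s * (Hc t r 1 + Hc t r (t - 1)))" by simp
  then show ?thesis by (subst (asm) sums_Suc_iff) (simp add: tau_prob_0)
qed


lemma alg_F:
  fixes r a :: real
  assumes "0 < r" "r < 1" "0 \<le> a" "a \<le> 1"
  shows "2*r/(1+r^2) * ((a - r*(r*a))/(1 - r*r*(a*a)) + (r - r*(a*a))/(1 - r*r*(a*a)))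
       = 2*r*(r + a)/((1+r^2)*(1 + r*a))"
proof -
  have "r*a \<le> r*1" using assms by (intro mult_left_mono) auto
  then have ra: "r*a < 1" using assms by linarith
  have ra0: "0 \<le> r*a" using assms by simp
  have d: "1 - r*r*(a*a) = (1 - r*a)*(1+r*a)" by (simp add: algebra_simps)
  have n: "(a - r*(r*a)) + (r - r*(a*a)) = (r + a)*(1 - r*a)" by (simp add: algebra_simps)
  have "(a - r*(r*a))/(1 - r*r*(a*a)) + (r - r*(a*a))/(1 - r*r*(a*a)) = (r+a)/(1+r*a)"
    unfolding add_divide_distrib[symmetric] n d using ra ra0 by simp
  then show ?thesis by simp
qed

definition Fs :: "nat \<Rightarrow> real \<Rightarrow> real" where
  "Fs t r = 2*r*(r + r^(t-1))/((1+r^2)*(1+r^t))"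
definition Gs :: "nat \<Rightarrow> real \<Rightarrow> real" where
  "Gs t r = r^t*(1-r^2)/((1+r^2)*(1-r^(2*t)))"

lemma Fs_eq:
  assumes t: "t \<ge> 2" and r: "0 < r" "r < 1"
  shows "sr r * (Hc t r 1 + Hc t r (t-1)) = Fs t r"
proof -
  obtain m where tm: "t = Suc m" using t by (cases t) auto
  define a where "a = r^m"
  have p2: "r^(m*2) = r^m * r^m" by (simp add: power_mult power2_eq_square)
  have a: "0 \<le> a" "a \<le> 1" using r by (auto simp: a_def power_le_one)
  have h1: "Hc t r 1 = (a - r*(r*a))/(1 - r*r*(a*a))"
    unfolding Hc_def tm a_def by (simp add: power_add mult_2 algebra_simps p2)
  have h2: "Hc t r (t-1) = (r - r*(a*a))/(1 - r*r*(a*a))"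
    unfolding Hc_def tm a_def by (simp add: power_add mult_2 algebra_simps p2)
  have f: "Fs t r = 2*r*(r + a)/((1+r^2)*(1 + r*a))"
    unfolding Fs_def tm a_def by simp
  show ?thesis unfolding h1 h2 f sr_def by (rule alg_F[OF r a])
qed

lemma Gs_eq:
  assumes t: "t \<ge> 2" and r: "0 < r" "r < 1"
  shows "sr r / 2 * Hc t r 1 = Gs t r"
proof -
  obtain m where tm: "t = Suc m" using t by (cases t) auto
  define a where "a = r^m"
  have p2: "r^(m*2) = r^m * r^m" by (simp add: power_mult power2_eq_square)
  have h1: "Hc t r 1 = (a - r*(r*a))/(1 - r*r*(a*a))"
    unfolding Hc_def tm a_def by (simp add: power_add mult_2 algebra_simps p2)
  have g: "Gs t r = (r*a)*(1-r^2)/((1+r^2)*(1 - r*r*(a*a)))"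
    unfolding Gs_def tm a_def by (simp add: power_add mult_2 algebra_simps p2)
  have p: "1 + r^2 \<noteq> 0" using zero_le_power2[of r] by linarith
  show ?thesis unfolding h1 g sr_half using p by (simp add: power2_eq_square algebra_simps)
qed


lemma exp_sr: "0 < r \<Longrightarrow> exp (- (- ln (sr r)) * real n) = sr r ^ n"
proof -
  assume r: "0 < r"
  have "exp (- (- ln (sr r)) * real n) = exp (real n * ln (sr r))" by (simp add: mult.commute)
  also have "\<dots> = exp (ln (sr r)) ^ n" by (rule exp_of_nat_mult)
  also have "\<dots> = sr r ^ n" using sr_pos[OF r] by simp
  finally show ?thesis .
qed

lemma tau_prob_nonneg: "0 \<le> tau_prob T n" by (simp add: tau_prob_def)
lemma tau1_prob_nonneg: "0 \<le> tau1_prob T n" by (simp add: tau1_prob_def)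

lemma tau_prob_le1: "t \<ge> 2 \<Longrightarrow> tau_prob (enat t) n \<le> 1"
proof (cases n)
  case 0 then show ?thesis by (simp add: tau_prob_0)
next
  case (Suc k)
  assume "t \<ge> 2"
  then show ?thesis unfolding Suc by (simp only: tau_prob_Suc u_le1)
qed

lemma tau_prob_inf_le1: "tau_prob \<infinity> n \<le> 1"
proof -
  have "tau_prob \<infinity> n = tau_prob (enat (n+2)) n" by (rule tau_prob_inf) simp
  also have "\<dots> \<le> 1" by (rule tau_prob_le1) simp
  finally show ?thesis .
qed

lemma Q_fin:
  assumes t: "t \<ge> 2" and r: "0 < r" "r < 1"
  shows "Q (enat t) (- ln (sr r)) = ennreal (Fs t r)"
proof -
  have S: "(\<lambda>n. sr r ^ n * tau_prob (enat t) n) sums Fs t r"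
    using sums_tau[OF t r] Fs_eq[OF t r] by simp
  have nn: "0 \<le> sr r ^ n * tau_prob (enat t) n" for n
    using sr_pos[OF r(1)] tau_prob_nonneg[of "enat t" n] by simp
  have "Q (enat t) (- ln (sr r)) = (\<Sum>n. ennreal (sr r ^ n * tau_prob (enat t) n))"
    unfolding Q_def exp_sr[OF r(1)] ..
  also have "\<dots> = ennreal (\<Sum>n. sr r ^ n * tau_prob (enat t) n)"
    by (rule suminf_ennreal2[OF nn sums_summable[OF S]])
  also have "\<dots> = ennreal (Fs t r)" using S by (simp add: sums_iff)
  finally show ?thesis .
qed

lemma Q1_fin:
  assumes t: "t \<ge> 2" and r: "0 < r" "r < 1"
  shows "Q1 t (- ln (sr r)) = Gs t r"
proof -
  have S: "(\<lambda>n. sr r ^ n * tau1_prob t n) sums Gs t r"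
    using sums_tau1[OF t r] Gs_eq[OF t r] by simp
  have nn: "0 \<le> sr r ^ n * tau1_prob t n" for n
    using sr_pos[OF r(1)] tau1_prob_nonneg[of t n] by simp
  have e: "(\<Sum>n. ennreal (sr r ^ n * tau1_prob t n)) = ennreal (\<Sum>n. sr r ^ n * tau1_prob t n)"
    by (rule suminf_ennreal2[OF nn sums_summable[OF S]])
  have g: "Gs t r = (\<Sum>n. sr r ^ n * tau1_prob t n)" using S by (simp add: sums_iff)
  have "0 \<le> Gs t r" unfolding g by (rule suminf_nonneg[OF sums_summable[OF S] nn])
  then show ?thesis unfolding Q1_def exp_sr[OF r(1)] e g[symmetric] by simp
qed


lemma Fs_lim: "0 < r \<Longrightarrow> r < 1 \<Longrightarrow> (\<lambda>m. Fs (m+2) r) \<longlonglongrightarrow> 2*r^2/(1+r^2)"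
proof -
  assume r: "0 < r" "r < 1"
  have eq: "Fs (m+2) r = 2*r*(r + r*r^m)/((1+r^2)*(1 + r^m*r^2))" for m
    by (simp add: Fs_def power_add power2_eq_square)
  have p: "1 + r^2 \<noteq> 0" using zero_le_power2[of r] by linarith
  have "(\<lambda>m. 2*r*(r + r*r^m)/((1+r^2)*(1 + r^m*r^2))) \<longlonglongrightarrow> 2*r*(r + r*0)/((1+r^2)*(1 + 0*r^2))"
    by (intro tendsto_intros LIMSEQ_power_zero) (use r p in auto)
  then show ?thesis unfolding eq by (simp add: power2_eq_square mult.assoc)
qed

lemma Q_inf:
  assumes r: "0 < r" "r < 1"
  shows "Q \<infinity> (- ln (sr r)) = ennreal (2*r^2/(1+r^2))"
proof -
  define s where "s = sr r"
  have s: "0 < s" "s < 1" using sr_pos sr_lt1 r by (auto simp: s_def)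
  define q where "q = sqrt s"
  have q: "0 < q" "q < 1" using s by (auto simp: q_def)
  have sq: "s^n = q^n * q^n" for n
    using s by (simp add: q_def power_mult_distrib[symmetric])
  define f where "f n = s^n * tau_prob \<infinity> n" for n
  have fnn: "0 \<le> f n" for n using s tau_prob_nonneg by (simp add: f_def)
  have fle: "f n \<le> s^n" for n
    using s tau_prob_inf_le1[of n] by (simp add: f_def mult_left_le)
  have sumf: "summable f"
    by (rule summable_comparison_test'[where g="\<lambda>n. s^n" and N=0]) (use s fnn fle in auto)
  define S where "S = suminf f"
  have bound: "\<bar>Fs t r - S\<bar> \<le> 2*q^t/(1-q)" if t: "t \<ge> 2" for t
  proof -
    define g where "g n = s^n * tau_prob (enat t) n" for n
    have "g = (\<lambda>n. sr r^n * tau_prob (enat t) n)" by (simp add: fun_eq_iff g_def s_def)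
    then have Sg: "g sums Fs t r"
      using sums_tau[OF t r] Fs_eq[OF t r] by simp
    have gnn: "0 \<le> g n" for n using s tau_prob_nonneg by (simp add: g_def)
    have gle: "g n \<le> s^n" for n
      using s tau_prob_le1[OF t, of n] by (simp add: g_def mult_left_le)
    have pt: "\<bar>g n - f n\<bar> \<le> 2*q^t * q^n" for n
    proof (cases "n < t")
      case True
      then have "g n = f n" by (simp add: f_def g_def tau_prob_inf)
      then show ?thesis using q by simp
    next
      case False
      have "\<bar>g n - f n\<bar> \<le> s^n" using gnn fnn gle fle by (simp add: abs_le_iff) (smt (verit))
      also have "\<dots> = q^n * q^n" by (rule sq)
      also have "\<dots> \<le> q^t * q^n" using q False by (intro mult_right_mono power_decreasing) auto
      also have "\<dots> \<le> 2*q^t * q^n" using q by simp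
      finally show ?thesis .
    qed
    have Sd: "(\<lambda>n. g n - f n) sums (Fs t r - S)"
      unfolding S_def by (rule sums_diff[OF Sg summable_sums[OF sumf]])
    have Sb: "(\<lambda>n. 2*q^t * q^n) sums (2*q^t * (1/(1-q)))"
      by (rule sums_mult[OF geometric_sums]) (use q in simp)
    have Sb': "(\<lambda>n. - (2*q^t * q^n)) sums (- (2*q^t * (1/(1-q))))"
      by (rule sums_minus[OF Sb])
    have "Fs t r - S \<le> 2*q^t * (1/(1-q))"
    proof (rule sums_le[OF _ Sd Sb])
      fix n show "g n - f n \<le> 2*q^t * q^n" using pt[of n] by linarith
    qed
    moreover have "- (2*q^t * (1/(1-q))) \<le> Fs t r - S"
    proof (rule sums_le[OF _ Sb' Sd])
      fix n show "- (2*q^t * q^n) \<le> g n - f n" using pt[of n] by linarith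
    qed
    ultimately show ?thesis by (simp add: abs_le_iff)
  qed
  have "(\<lambda>m. Fs (m+2) r - S) \<longlonglongrightarrow> 0"
  proof (rule Lim_null_comparison)
    show "\<forall>\<^sub>F m in sequentially. norm (Fs (m+2) r - S) \<le> 2*q^(m+2)/(1-q)"
    proof (intro always_eventually allI)
      fix m show "norm (Fs (m+2) r - S) \<le> 2*q^(m+2)/(1-q)" using bound[of "m+2"] by simp
    qed
    have "(\<lambda>m. 2*(q^m*q^2)/(1-q)) \<longlonglongrightarrow> 2*(0*q^2)/(1-q)"
      by (intro tendsto_intros LIMSEQ_power_zero) (use q in auto)
    moreover have "(\<lambda>m. 2*q^(m+2)/(1-q)) = (\<lambda>m. 2*(q^m*q^2)/(1-q))" by (simp add: power_add power2_eq_square mult_ac)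
    ultimately show "(\<lambda>m. 2*q^(m+2)/(1-q)) \<longlonglongrightarrow> 0" by simp
  qed
  then have "(\<lambda>m. Fs (m+2) r) \<longlonglongrightarrow> S" by (rule LIM_zero_cancel)
  then have SS: "S = 2*r^2/(1+r^2)" using Fs_lim[OF r] LIMSEQ_unique by blast
  have "Q \<infinity> (- ln (sr r)) = (\<Sum>n. ennreal (f n))"
    unfolding Q_def exp_sr[OF r(1)] f_def s_def ..
  also have "\<dots> = ennreal S" unfolding S_def by (rule suminf_ennreal2[OF fnn sumf])
  finally show ?thesis using SS by simp
qed

lemma Q_strict:
  assumes p2: "tau_prob T 2 > 0" and Q1: "Q T l1 = ennreal c" and Q2: "Q T l2 = ennreal c"
    and c: "0 \<le> c" and l: "l1 < l2"
  shows False
proof -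
  define f where "f n = exp (- l1 * real n) * tau_prob T n" for n
  define g where "g n = exp (- l2 * real n) * tau_prob T n" for n
  have fnn: "0 \<le> f n" for n by (simp add: f_def tau_prob_nonneg)
  have gnn: "0 \<le> g n" for n by (simp add: g_def tau_prob_nonneg)
  have ef: "(\<Sum>n. ennreal (f n)) = ennreal c" using Q1 by (simp add: Q_def f_def)
  have eg: "(\<Sum>n. ennreal (g n)) = ennreal c" using Q2 by (simp add: Q_def g_def)
  have sf: "summable f" by (rule summable_suminf_not_top[OF fnn]) (simp add: ef)
  have sg: "summable g" by (rule summable_suminf_not_top[OF gnn]) (simp add: eg)
  have "ennreal (suminf f) = ennreal c" using ef suminf_ennreal2[OF fnn sf] by simp
  then have vf: "suminf f = c" using c suminf_nonneg[OF sf fnn] by simp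
  have "ennreal (suminf g) = ennreal c" using eg suminf_ennreal2[OF gnn sg] by simp
  then have vg: "suminf g = c" using c suminf_nonneg[OF sg gnn] by simp
  have d: "0 \<le> f n - g n" for n
  proof -
    have "exp (- l2 * real n) \<le> exp (- l1 * real n)" using l by (simp add: mult_right_mono)
    then show ?thesis unfolding f_def g_def using tau_prob_nonneg[of T n]
      by (simp add: mult_right_mono)
  qed
  have "exp (- l2 * 2) < exp (- l1 * 2)" using l by simp
  then have d2: "0 < f 2 - g 2" unfolding f_def g_def using p2 by simp
  have "0 < (\<Sum>n. f n - g n)" by (rule suminf_pos2[OF summable_diff[OF sf sg] d d2])
  moreover have "(\<Sum>n. f n - g n) = 0" using suminf_diff[OF sf sg] vf vg by simp
  ultimately show False by simp
qed

lemma phi_eq: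
  assumes p2: "tau_prob T 2 > 0" and Q0: "Q T l0 = ennreal (exp (- \<delta>))"
  shows "phi \<delta> T = l0"
  unfolding phi_def
proof (rule the_equality)
  show "Q T l0 = ennreal (exp (- \<delta>))" by (rule Q0)
  fix l assume Ql: "Q T l = ennreal (exp (- \<delta>))"
  show "l = l0"
  proof (rule ccontr)
    assume "l \<noteq> l0"
    then consider "l < l0" | "l0 < l" by linarith
    then show False
    proof cases
      case 1 then show False using Q_strict[OF p2 Ql Q0] by simp
    next
      case 2 then show False using Q_strict[OF p2 Q0 Ql] by simp
    qed
  qed
qed

lemma tau_prob_2_fin: assumes t: "t \<ge> 2" shows "tau_prob (enat t) 2 > 0"
proof -
  let ?P = "\<lambda>v. v = 0 \<or> v = int t"
  have "tau_prob (enat t) 2 = u t ?P 1 1" using tau_prob_Suc[OF t, of 1] by (simp add: numeral_2_eq_2)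
  also have "\<dots> = (u t ?P 2 0 + u t ?P 0 0)/2" using t by (simp add: u_Suc)
  also have "\<dots> > 0" using u_nonneg[of t ?P 2 0] by (simp add: u_0)
  finally show ?thesis .
qed

lemma tau_prob_2_inf: "tau_prob \<infinity> 2 > 0"
  using tau_prob_inf[of 2 3] tau_prob_2_fin[of 3] by simp


lemma sr_sqrt:
  assumes "0 < a" "a < 1"
  shows "sqrt (1 - (sr a)^2) = (1 - a^2)/(1 + a^2)"
proof -
  have p: "1 + a^2 > 0" by (simp add: add_pos_nonneg)
  have gen: "1 - (x/P)^2 = (P^2 - x^2)/P^2" if "P \<noteq> 0" for x P :: real
    using that by (simp add: field_simps)
  have "1 - (sr a)^2 = ((1+a^2)^2 - (2*a)^2)/(1+a^2)^2"
    unfolding sr_def using p by (intro gen) simp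
  also have "(1+a^2)^2 - (2*a)^2 = (1 - a^2)^2" by (simp add: power2_eq_square algebra_simps)
  finally have "1 - (sr a)^2 = ((1 - a^2)/(1 + a^2))^2" by (simp add: power_divide)
  moreover have "0 \<le> (1 - a^2)/(1 + a^2)" using assms p by (simp add: power_le_one)
  ultimately show ?thesis by (simp only: real_sqrt_abs abs_of_nonneg)
qed

lemma a_prop:
  fixes E :: real
  assumes "0 < E" "E < 1"
  defines "a \<equiv> sqrt (E/(2-E))"
  shows "0 < a" "a < 1" "2*a^2/(1+a^2) = E" "a^2 = E/(2-E)"
proof -
  have q: "0 < E/(2-E)" "E/(2-E) < 1" using assms by (auto simp: field_simps)
  show "0 < a" "a < 1" using q by (auto simp: a_def)
  show a2: "a^2 = E/(2-E)" using q by (simp add: a_def)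
  have "2 - E \<noteq> 0" using assms by simp
  then show "2*a^2/(1+a^2) = E" unfolding a2 by (simp add: field_simps)
qed

lemma Fs_diff:
  assumes t: "t \<ge> 2" and b: "0 < b" "b < 1"
  shows "Fs t b - 2*b^2/(1+b^2) = 2*b^t*(1-b^2)/((1+b^2)*(1+b^t))"
proof -
  obtain k where tk: "t = Suc k" using t by (cases t) auto
  define c where "c = b^k"
  have c: "0 \<le> c" using b by (simp add: c_def)
  have f: "Fs t b = 2*b*(b + c)/((1+b^2)*(1 + b*c))" unfolding Fs_def tk c_def by simp
  have bt: "b^t = b*c" unfolding tk c_def by simp
  have P: "1 + b^2 \<noteq> 0" using zero_le_power2[of b] by linarith
  have Q: "1 + b*c \<noteq> 0" using b c by (smt (verit) mult_nonneg_nonneg)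
  define P' where "P' = 1 + b^2"
  define Q' where "Q' = 1 + b*c"
  have gen: "X/(P'*Q') - Y/P' = (X - Y*Q')/(P'*Q')" for X Y
    using P Q unfolding P'_def[symmetric] Q'_def[symmetric] by (simp add: field_simps)
  have num: "2*b*(b + c) - 2*b^2*(1+b*c) = 2*(b*c)*(1-b^2)" by (simp add: power2_eq_square algebra_simps)
  show ?thesis unfolding f bt using gen[of "2*b*(b + c)" "2*b^2"] num by (simp add: P'_def Q'_def)
qed

lemma cont_Fs: "continuous_on {0..1} (Fs t)"
proof -
  have nz: "(1 + x^2) * (1 + x^t) \<noteq> 0" if "x \<in> {0..1::real}" for x
  proof -
    have "0 < 1 + x^2" by (simp add: add_pos_nonneg)
    moreover have "0 < 1 + x^t" using that by (simp add: add_pos_nonneg)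
    ultimately show ?thesis by simp
  qed
  have "continuous_on {0..1} (\<lambda>r::real. 2*r*(r + r^(t-1))/((1+r^2)*(1+r^t)))"
    by (intro continuous_intros) (use nz in auto)
  then show ?thesis unfolding Fs_def[abs_def] .
qed

lemma exists_root:
  assumes t: "t \<ge> 2" and E: "0 < E" "E < 1"
  shows "\<exists>b. 0 < b \<and> b < 1 \<and> Fs t b = E"
proof -
  have f0: "Fs t 0 = 0" by (simp add: Fs_def)
  have f1: "Fs t 1 = 1" by (simp add: Fs_def)
  obtain b where b: "0 \<le> b" "b \<le> 1" "Fs t b = E"
    using IVT'[of "Fs t" 0 E 1] cont_Fs f0 f1 E by auto
  have "b \<noteq> 0" using b f0 E by auto
  moreover have "b \<noteq> 1" using b f1 E by auto
  ultimately have "0 < b \<and> b < 1 \<and> Fs t b = E" using b by auto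
  then show ?thesis by blast
qed


lemma est:
  assumes t: "t \<ge> 2" and a: "0 < a" "a < 1" and b: "0 < b" "b < 1"
    and eq: "Fs t b = 2*a^2/(1+a^2)"
  shows "b < a" "a - b \<le> 4*a^t/a"
proof -
  have R: "Fs t b - 2*b^2/(1+b^2) = 2*b^t*(1-b^2)/((1+b^2)*(1+b^t))" by (rule Fs_diff[OF t b])
  have b2: "b^2 < 1" using b by (simp add: power_less_one_iff)
  have bt: "0 < b^t" "b^t < 1" using b t by (auto simp: power_less_one_iff)
  have Y: "1 \<le> (1+b^2)*(1+b^t)"
  proof -
    have "1*1 \<le> (1+b^2)*(1+b^t)" using bt by (intro mult_mono) auto
    then show ?thesis by simp
  qed
  have Rpos: "0 < 2*b^t*(1-b^2)/((1+b^2)*(1+b^t))" using bt b2 Y by simp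
  have Rle: "2*b^t*(1-b^2)/((1+b^2)*(1+b^t)) \<le> 2*b^t"
  proof -
    have "2*b^t*(1-b^2) \<le> 2*b^t * 1" using bt by (intro mult_left_mono) auto
    also have "\<dots> \<le> 2*b^t*((1+b^2)*(1+b^t))" using bt Y by (intro mult_left_mono) auto
    finally show ?thesis using Y by (simp add: divide_le_eq)
  qed
  define G where "G = a^2 - b^2"
  have pa: "0 < 1 + a^2" and pb: "0 < 1 + b^2" by (auto simp: add_pos_nonneg)
  have D: "2*a^2/(1+a^2) - 2*b^2/(1+b^2) = 2*G/((1+a^2)*(1+b^2))"
    using pa pb unfolding G_def by (simp add: field_simps)
  have DR: "2*G/((1+a^2)*(1+b^2)) = 2*b^t*(1-b^2)/((1+b^2)*(1+b^t))"
    using R D eq by simp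
  have Gpos: "0 < G"
  proof -
    have "0 < 2*G/((1+a^2)*(1+b^2))" using DR Rpos by simp
    moreover have "0 < (1+a^2)*(1+b^2)" using pa pb by simp
    ultimately show ?thesis by (simp add: zero_less_divide_iff)
  qed
  show ba: "b < a"
  proof (rule ccontr)
    assume "\<not> b < a"
    then have "a^2 \<le> b^2" using a by (intro power_mono) auto
    then show False using Gpos by (simp add: G_def)
  qed
  have den: "(1+a^2)*(1+b^2) \<le> 4"
  proof -
    have "(1+a^2)*(1+b^2) \<le> 2*2" using a b2 pa pb by (intro mult_mono) (auto simp: power_le_one less_imp_le)
    then show ?thesis by simp
  qed
  have "G/2 = 2*G/4" by simp
  also have "\<dots> \<le> 2*G/((1+a^2)*(1+b^2))" using den Gpos pa pb by (intro divide_left_mono) auto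
  also have "\<dots> \<le> 2*b^t" using DR Rle by simp
  also have "\<dots> \<le> 2*a^t" using ba b by (intro mult_left_mono power_mono) auto
  finally have G4: "G \<le> 4*a^t" by simp
  have "a*(a-b) \<le> G" unfolding G_def using ba b
    by (simp add: power2_eq_square algebra_simps mult_left_mono)
  then have "a*(a-b) \<le> 4*a^t" using G4 by linarith
  then show "a - b \<le> 4*a^t/a" using a by (simp add: le_divide_eq mult.commute)
qed


theorem lemma7:
  fixes \<delta> :: real
  assumes "\<delta> > 0"
  shows "c_delta \<delta> = \<delta> / 2 + ln (sqrt (2 - exp (- \<delta>)))
     \<and> (\<lambda>m::nat. Q1 (2 * m) (phi \<delta> (enat (2 * m))))
           \<sim>[sequentially]
         (\<lambda>m::nat. sqrt (1 - exp (- 2 * phi \<delta> \<infinity>)) * exp (- c_delta \<delta> * real (2 * m)))"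
proof -
  define E where "E = exp (- \<delta>)"
  have E: "0 < E" "E < 1" using assms by (auto simp: E_def)
  define a where "a = sqrt (E/(2-E))"
  note ap = a_prop[OF E, folded a_def]
  have a: "0 < a" "a < 1" using ap by auto
  have phi_inf: "phi \<delta> \<infinity> = - ln (sr a)"
    by (rule phi_eq[OF tau_prob_2_inf]) (simp add: Q_inf[OF a] ap(3) E_def)
  define K where "K = (1 - a^2)/(1 + a^2)"
  have pa: "0 < 1 + a^2" by (simp add: add_pos_nonneg)
  have a2: "a^2 < 1" using a by (simp add: power_less_one_iff)
  have Kpos: "0 < K" unfolding K_def using pa a2 by simp
  have s: "0 < sr a" using sr_pos[OF a(1)] .
  have ex2: "exp (- 2 * phi \<delta> \<infinity>) = (sr a)^2"
  proof -
    have "exp (- 2 * phi \<delta> \<infinity>) = exp (real 2 * ln (sr a))" by (simp add: phi_inf)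
    also have "\<dots> = exp (ln (sr a)) ^ 2" by (rule exp_of_nat_mult)
    finally show ?thesis using s by simp
  qed
  have Kf: "sqrt (1 - exp (- 2 * phi \<delta> \<infinity>)) = K" unfolding ex2 K_def by (rule sr_sqrt[OF a])
  have c: "c_delta \<delta> = - ln a"
  proof -
    have "1 + K = 2/(1+a^2)" unfolding K_def using pa by (simp add: field_simps)
    then have q: "(1 + K)/sr a = 1/a" unfolding sr_def using pa a by (simp add: field_simps)
    have "c_delta \<delta> = ln (1 + K) - ln (sr a)" unfolding c_delta_def Kf unfolding phi_inf by simp
    also have "\<dots> = ln ((1 + K)/sr a)" using Kpos s by (simp add: ln_div)
    also have "\<dots> = - ln a" unfolding q using a by (simp add: ln_div)
    finally show ?thesis .
  qed
  have part1: "c_delta \<delta> = \<delta> / 2 + ln (sqrt (2 - exp (- \<delta>)))"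
  proof -
    have "ln a = ln (E/(2-E)) / 2" unfolding a_def using E by (simp add: ln_sqrt)
    also have "\<dots> = (ln E - ln (2-E))/2" using E by (simp add: ln_div)
    also have "\<dots> = (- \<delta> - ln (2-E))/2" by (simp add: E_def)
    finally have "ln a = (- \<delta> - ln (2-E))/2" .
    moreover have "ln (sqrt (2 - E)) = ln (2-E)/2" using E by (simp add: ln_sqrt)
    ultimately show ?thesis unfolding c E_def[symmetric] by simp
  qed
  have "\<forall>m. \<exists>b. 1 \<le> m \<longrightarrow> 0 < b \<and> b < 1 \<and> Fs (2*m) b = E"
    using exists_root E by auto
  then obtain B where B: "\<And>m. 1 \<le> m \<Longrightarrow> 0 < B m \<and> B m < 1 \<and> Fs (2*m) (B m) = E"
    by metis
  have Q1T: "Q1 (2*m) (phi \<delta> (enat (2*m))) = Gs (2*m) (B m)" if m: "1 \<le> m" for m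
  proof -
    have t: "2*m \<ge> 2" using m by simp
    have b: "0 < B m" "B m < 1" using B[OF m] by auto
    have "phi \<delta> (enat (2*m)) = - ln (sr (B m))"
      by (rule phi_eq[OF tau_prob_2_fin[OF t]]) (use Q_fin[OF t b] B[OF m] in \<open>simp add: E_def\<close>)
    then show ?thesis using Q1_fin[OF t b] by simp
  qed
  have est_m: "B m < a \<and> a - B m \<le> 4*a^(2*m)/a" if m: "1 \<le> m" for m
  proof -
    have t: "2*m \<ge> 2" using m by simp
    have b: "0 < B m" "B m < 1" using B[OF m] by auto
    have eq: "Fs (2*m) (B m) = 2*a^2/(1+a^2)" using B[OF m] ap(3) by simp
    show ?thesis using est[OF t a b eq] by simp
  qed
  have ev1: "eventually (\<lambda>m. 1 \<le> m) sequentially" by (rule eventually_ge_at_top)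
  have apow: "a^(2*m) = (a^2)^m" for m by (simp add: power_mult)
  have L0: "(\<lambda>m. real (2*m) * a^(2*m)) \<longlonglongrightarrow> 0"
  proof -
    have "(\<lambda>m. of_nat m * (a^2)^m) \<longlonglongrightarrow> (0::real)"
      by (rule powser_times_n_limit_0) (use a a2 in simp)
    then have "(\<lambda>m. 2 * (of_nat m * (a^2)^m)) \<longlonglongrightarrow> (2 * 0::real)" by (intro tendsto_mult_left)
    then show ?thesis by (simp add: apow mult.assoc)
  qed
  have La: "(\<lambda>m. a^(2*m)) \<longlonglongrightarrow> 0"
    unfolding apow by (rule LIMSEQ_power_zero) (use a a2 in simp)
  have L1: "(\<lambda>m. (B m / a)^(2*m)) \<longlonglongrightarrow> 1"
  proof (rule tendsto_sandwich)
    show "eventually (\<lambda>m. 1 - 4 * (real (2*m) * a^(2*m)) / a^2 \<le> (B m / a)^(2*m)) sequentially"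
    proof (rule eventually_mono[OF ev1])
      fix m :: nat assume m: "1 \<le> m"
      have b: "0 < B m" "B m < a" "a - B m \<le> 4*a^(2*m)/a" using B[OF m] est_m[OF m] by auto
      define x where "x = B m / a - 1"
      have x1: "-1 \<le> x" using b a by (simp add: x_def)
      have xl: "- (4*a^(2*m)/a^2) \<le> x"
      proof -
        have "x = - ((a - B m)/a)" using a by (simp add: x_def field_simps)
        moreover have "(a - B m)/a \<le> (4*a^(2*m)/a)/a" using b a by (intro divide_right_mono) auto
        ultimately show ?thesis by (simp add: power2_eq_square)
      qed
      have "1 - 4 * (real (2*m) * a^(2*m)) / a^2 = 1 + real (2*m) * (- (4*a^(2*m)/a^2))"
        by simp
      also have "\<dots> \<le> 1 + real (2*m) * x" using xl by (intro add_left_mono mult_left_mono) auto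
      also have "\<dots> \<le> (1 + x)^(2*m)" by (rule Bernoulli_inequality[OF x1])
      also have "1 + x = B m / a" by (simp add: x_def)
      finally show "1 - 4 * (real (2*m) * a^(2*m)) / a^2 \<le> (B m / a)^(2*m)" .
    qed
    show "eventually (\<lambda>m. (B m / a)^(2*m) \<le> 1) sequentially"
    proof (rule eventually_mono[OF ev1])
      fix m :: nat assume m: "1 \<le> m"
      have b: "0 < B m" "B m < a" using B[OF m] est_m[OF m] by auto
      show "(B m / a)^(2*m) \<le> 1" using b a by (intro power_le_one) auto
    qed
    have "(\<lambda>m. 1 - 4 * (real (2*m) * a^(2*m)) / a^2) \<longlonglongrightarrow> 1 - 4 * 0 / a^2"
      by (intro tendsto_intros L0) (use a in simp)
    then show "(\<lambda>m. 1 - 4 * (real (2*m) * a^(2*m)) / a^2) \<longlonglongrightarrow> 1" by simp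
  qed (simp)
  have L2: "B \<longlonglongrightarrow> a"
  proof (rule tendsto_sandwich)
    show "eventually (\<lambda>m. a - 4*a^(2*m)/a \<le> B m) sequentially"
      using est_m by (intro eventually_mono[OF ev1]) (smt (verit))
    show "eventually (\<lambda>m. B m \<le> a) sequentially"
      using est_m by (intro eventually_mono[OF ev1]) (smt (verit))
    have "(\<lambda>m. a - 4*a^(2*m)/a) \<longlonglongrightarrow> a - 4*0/a"
      by (intro tendsto_intros La) (use a in simp)
    then show "(\<lambda>m. a - 4*a^(2*m)/a) \<longlonglongrightarrow> a" by simp
  qed (simp)
  have L3: "(\<lambda>m. B m ^ (2*(2*m))) \<longlonglongrightarrow> 0"
  proof (rule tendsto_sandwich)
    show "eventually (\<lambda>m. 0 \<le> B m ^ (2*(2*m))) sequentially"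
      using B by (intro eventually_mono[OF ev1]) (simp add: less_imp_le)
    show "eventually (\<lambda>m. B m ^ (2*(2*m)) \<le> (a^4)^m) sequentially"
    proof (rule eventually_mono[OF ev1])
      fix m :: nat assume m: "1 \<le> m"
      have b: "0 < B m" "B m < a" using B[OF m] est_m[OF m] by auto
      have "B m ^ (2*(2*m)) \<le> a ^ (2*(2*m))" using b by (intro power_mono) auto
      also have "\<dots> = (a^4)^m" by (simp add: power_mult[symmetric] mult.commute)
      finally show "B m ^ (2*(2*m)) \<le> (a^4)^m" .
    qed
    have "a^4 < 1" using a by (simp add: power_less_one_iff)
    then show "(\<lambda>m. (a^4)^m) \<longlonglongrightarrow> 0" using a by (intro LIMSEQ_power_zero) simp
  qed (simp)
  define ratio where "ratio m = (B m / a)^(2*m) * ((1 - B m^2)/(1 + B m^2)) / K / (1 - B m ^ (2*(2*m)))" for m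
  have Lr: "ratio \<longlonglongrightarrow> 1 * ((1 - a^2)/(1 + a^2)) / K / (1 - 0)"
    unfolding ratio_def[abs_def] by (intro tendsto_intros L1 L2 L3) (use pa Kpos in auto)
  have X1: "1 * ((1 - a^2)/(1 + a^2)) / K / (1 - 0) = 1" using Kpos a2 pa by (simp add: K_def)
  from Lr have Lr1: "ratio \<longlonglongrightarrow> 1" unfolding X1 .
  have targ: "sqrt (1 - exp (- 2 * phi \<delta> \<infinity>)) * exp (- c_delta \<delta> * real (2 * m)) = K * a^(2*m)" for m
  proof -
    have "exp (- c_delta \<delta> * real (2 * m)) = exp (real (2*m) * ln a)" by (simp add: c mult.commute)
    also have "\<dots> = exp (ln a) ^ (2*m)" by (rule exp_of_nat_mult)
    finally show ?thesis using a Kf by simp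
  qed
  have rat_eq: "Q1 (2*m) (phi \<delta> (enat (2*m))) / (sqrt (1 - exp (- 2 * phi \<delta> \<infinity>)) * exp (- c_delta \<delta> * real (2 * m))) = ratio m"
    if m: "1 \<le> m" for m
  proof -
    have b: "0 < B m" "B m < 1" using B[OF m] by auto
    have pb: "0 < 1 + B m^2" by (simp add: add_pos_nonneg)
    have bb: "B m ^ (2*(2*m)) < 1" using b m by (simp add: power_less_one_iff)
    have an: "a^(2*m) \<noteq> 0" using a by simp
    show ?thesis unfolding targ Q1T[OF m] Gs_def ratio_def
      using pb bb an Kpos a by (simp add: power_divide field_simps)
  qed
  have "((\<lambda>m. Q1 (2*m) (phi \<delta> (enat (2*m))) / (sqrt (1 - exp (- 2 * phi \<delta> \<infinity>)) * exp (- c_delta \<delta> * real (2 * m)))) \<longlonglongrightarrow> 1)"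
    using Lr1 by (rule Lim_transform_eventually) (use rat_eq in \<open>auto intro!: eventually_mono[OF ev1]\<close>)
  then have part2: "(\<lambda>m::nat. Q1 (2 * m) (phi \<delta> (enat (2 * m))))
           \<sim>[sequentially]
         (\<lambda>m::nat. sqrt (1 - exp (- 2 * phi \<delta> \<infinity>)) * exp (- c_delta \<delta> * real (2 * m)))"
    by (rule asymp_equivI')
  show ?thesis using part1 part2 by simp
qed


end
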